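(* Let $t\ge0$ and define the operator $K^t_{\mathbb H}:=C_{\mathbb H}^{-1}C^t_{\mathbb H}$ in $\mathbb H$ on its natural domain $\operatorname{dom}K^t_{\mathbb H}=\{\psi\in\mathbb H: C^t_{\mathbb H}\psi\in\operatorname{ran}C_{\mathbb H}\}$. Then $$ \operatorname{dom}K^t_{\mathbb H}=\{\psi\in\mathbb H:K^t\psi\in\mathbb H\}, $$ and $K^t_{\mathbb H}$ is a closed operator in $\mathbb H$.
   Context: Let $\mathcal X\subset\mathbb R^d$ and consider the SDE $dX_t=b(X_t)\,dt+\sigma(X_t)\,dW_t$ ($W_t$ $d$-dimensional Brownian motion, $b,\sigma$ Lipschitz with $(1+\|x\|_2)^{-1}(\|b(x)\|_2+\|\sigma(x)\|_F)$ bounded), with transition kernel $\rho_t$ and invariant Borel probability measure $\mu$. Koopman operator $(K^t\psi)(x)=\int\psi(y)\rho_t(x,dy)$, a contraction on $L^2_\mu(\mathcal X)$. Let $k$ be a continuous symmetric positive definite kernel with RKHS $\mathbb H$, $\Phi(x)=k(x,\cdot)$, $\varphi(x)=k(x,x)$, satisfying (A1) $\varphi\in L^2_\mu$; (A2) $\psi\in L^2_\mu$ with $\iint k(x,y)\psi(x)\psi(y)d\mu d\mu=0$ implies $\psi=0$; (A3) $\psi\in\mathbb H$ with $\psi=0$ $\mu$-a.e. implies $\psi\equiv0$. Then $\mathbb H$ is a subspace of $L^2_\mu$. Let $\mathcal E:L^2_\mu\to\mathbb H$, $\mathcal E\psi=\int\psi(x)\Phi(x)\,d\mu(x)$, whose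 adjoint $\mathcal E^*$ is the inclusion $\mathbb H\hookrightarrow L^2_\mu$; $C_{\mathbb H}=\mathcal E\mathcal E^*$ (injective) and $C^t_{\mathbb H}=\mathcal EK^t\mathcal E^*$. *)

theory Defs
  imports "HOL-Probability.Probability"
begin

text \<open>A finite kernel combination sum_i a_i k(x_i, .) is represented by the list of
  pairs (a_i, x_i).\<close>

definition comb_fun :: "('a \<Rightarrow> 'a \<Rightarrow> real) \<Rightarrow> (real \<times> 'a) list \<Rightarrow> 'a \<Rightarrow> real" where
  "comb_fun k cs = (\<lambda>y. \<Sum>(a, x)\<leftarrow>cs. a * k x y)"

definition comb_sqnorm :: "('a \<Rightarrow> 'a \<Rightarrow> real) \<Rightarrow> (real \<times> 'a) list \<Rightarrow> real" where
  "comb_sqnorm k cs = (\<Sum>(a, x)\<leftarrow>cs. \<Sum>(b, z)\<leftarrow>cs. a * b * k x z)"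

definition comb_diff :: "(real \<times> 'a) list \<Rightarrow> (real \<times> 'a) list \<Rightarrow> (real \<times> 'a) list" where
  "comb_diff cs ds = cs @ map (\<lambda>(a, x). (- a, x)) ds"

definition pd_kernel :: "'a::topological_space set \<Rightarrow> ('a \<Rightarrow> 'a \<Rightarrow> real) \<Rightarrow> bool" where
  "pd_kernel X k \<longleftrightarrow>
     continuous_on (X \<times> X) (\<lambda>(x, y). k x y) \<and>
     (\<forall>x\<in>X. \<forall>y\<in>X. k x y = k y x) \<and>
     (\<forall>cs. set (map snd cs) \<subseteq> X \<longrightarrow> comb_sqnorm k cs \<ge> 0)"

text \<open>F is a Cauchy sequence (in RKHS norm) of finite combinations converging pointwise
  on X to f: the completion of the pre-Hilbert space span{k(x,.)} realised as functions.\<close>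
definition rkhs_approx ::
    "'a set \<Rightarrow> ('a \<Rightarrow> 'a \<Rightarrow> real) \<Rightarrow> (nat \<Rightarrow> (real \<times> 'a) list) \<Rightarrow> ('a \<Rightarrow> real) \<Rightarrow> bool" where
  "rkhs_approx X k F f \<longleftrightarrow>
     (\<forall>n. set (map snd (F n)) \<subseteq> X) \<and>
     (\<forall>e>0. \<exists>N. \<forall>m\<ge>N. \<forall>n\<ge>N. comb_sqnorm k (comb_diff (F m) (F n)) < e) \<and>
     (\<forall>y\<in>X. (\<lambda>n. comb_fun k (F n) y) \<longlonglongrightarrow> f y)"

text \<open>The RKHS H of k on X (functions are only relevant on X).\<close>
definition rkhs :: "'a set \<Rightarrow> ('a \<Rightarrow> 'a \<Rightarrow> real) \<Rightarrow> ('a \<Rightarrow> real) set" where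
  "rkhs X k = {f. \<exists>F. rkhs_approx X k F f}"

definition rkhs_norm :: "'a set \<Rightarrow> ('a \<Rightarrow> 'a \<Rightarrow> real) \<Rightarrow> ('a \<Rightarrow> real) \<Rightarrow> real" where
  "rkhs_norm X k f =
     (THE r. \<exists>F. rkhs_approx X k F f \<and> (\<lambda>n. sqrt (comb_sqnorm k (F n))) \<longlonglongrightarrow> r)"

definition square_integrable :: "'a measure \<Rightarrow> ('a \<Rightarrow> real) \<Rightarrow> bool" where
  "square_integrable M f \<longleftrightarrow> f \<in> borel_measurable M \<and> integrable M (\<lambda>x. (f x)\<^sup>2)"

definition koopman :: "('a \<Rightarrow> 'a measure) \<Rightarrow> ('a \<Rightarrow> real) \<Rightarrow> 'a \<Rightarrow> real" where
  "koopman \<rho> \<psi> = (\<lambda>x. \<integral>y. \<psi> y \<partial>(\<rho> x))"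

text \<open>The operator E : L^2_mu -> H, evaluated pointwise (reproducing property):
  (E psi)(y) = int psi(x) k(x,y) dmu(x).  Then C_H = E E^* (E^* the inclusion) and
  C^t_H = E K^t E^*.\<close>
definition kme :: "'a measure \<Rightarrow> ('a \<Rightarrow> 'a \<Rightarrow> real) \<Rightarrow> ('a \<Rightarrow> real) \<Rightarrow> 'a \<Rightarrow> real" where
  "kme \<mu> k \<psi> = (\<lambda>y. \<integral>x. \<psi> x * k x y \<partial>\<mu>)"

text \<open>Graph of K^t_H = C_H^{-1} C^t_H: pairs (psi, phi) in H x H with C_H phi = C^t_H psi.\<close>
definition koopH_graph ::
    "'a measure \<Rightarrow> 'a set \<Rightarrow> ('a \<Rightarrow> 'a \<Rightarrow> real) \<Rightarrow> ('a \<Rightarrow> 'a measure) \<Rightarrow> (('a \<Rightarrow> real) \<times> ('a \<Rightarrow> real)) set" where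
  "koopH_graph \<mu> X k \<rho> =
     {(\<psi>, \<phi>). \<psi> \<in> rkhs X k \<and> \<phi> \<in> rkhs X k \<and>
        (\<forall>y\<in>X. kme \<mu> k \<phi> y = kme \<mu> k (koopman \<rho> \<psi>) y)}"

text \<open>G is the graph of a (single-valued) closed operator in H: elements of H are
  identified when they agree on X; closedness w.r.t. the RKHS norm, via sequences.\<close>
definition rkhs_closed_operator ::
    "'a set \<Rightarrow> ('a \<Rightarrow> 'a \<Rightarrow> real) \<Rightarrow> (('a \<Rightarrow> real) \<times> ('a \<Rightarrow> real)) set \<Rightarrow> bool" where
  "rkhs_closed_operator X k G \<longleftrightarrow>
     G \<subseteq> rkhs X k \<times> rkhs X k \<and>
     (\<forall>\<psi> \<phi>1 \<phi>2. (\<psi>, \<phi>1) \<in> G \<longrightarrow> (\<psi>, \<phi>2) \<in> G \<longrightarrow> (\<forall>x\<in>X. \<phi>1 x = \<phi>2 x)) \<and>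
     (\<forall>\<psi>s \<phi>s \<psi> \<phi>. (\<forall>n. (\<psi>s n, \<phi>s n) \<in> G) \<longrightarrow> \<psi> \<in> rkhs X k \<longrightarrow> \<phi> \<in> rkhs X k \<longrightarrow>
        (\<lambda>n. rkhs_norm X k (\<lambda>x. \<psi>s n x - \<psi> x)) \<longlonglongrightarrow> 0 \<longrightarrow>
        (\<lambda>n. rkhs_norm X k (\<lambda>x. \<phi>s n x - \<phi> x)) \<longlonglongrightarrow> 0 \<longrightarrow>
        (\<psi>, \<phi>) \<in> G)"

end

theory Submission
  imports Defs
begin


definition BB :: "('a \<Rightarrow> 'a \<Rightarrow> real) \<Rightarrow> (real \<times> 'a) list \<Rightarrow> (real \<times> 'a) list \<Rightarrow> real" where
  "BB k cs ds = (\<Sum>(a, x)\<leftarrow>cs. \<Sum>(b, z)\<leftarrow>ds. a * b * k x z)"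

definition scl :: "real \<Rightarrow> (real \<times> 'a) list \<Rightarrow> (real \<times> 'a) list" where
  "scl c cs = map (\<lambda>(a, x). (c * a, x)) cs"

lemma sum_list_map_cmult: "(\<Sum>p\<leftarrow>l. c * f p) = c * (\<Sum>p\<leftarrow>l. f p)" for c :: real
  by (induction l) (auto simp: algebra_simps)

lemma sum_list_map_add: "(\<Sum>p\<leftarrow>l. f p + g p) = (\<Sum>p\<leftarrow>l. f p) + (\<Sum>p\<leftarrow>l. g p)" for f :: "_ \<Rightarrow> real"
  by (induction l) (auto simp: algebra_simps)

lemma sum_list_map_zero: "(\<Sum>p\<leftarrow>l. (0::real)) = 0"
  by (induction l) auto

lemma comb_diff_scl: "comb_diff cs ds = cs @ scl (-1) ds"
  unfolding comb_diff_def scl_def by auto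

lemma BB_fun1: "BB k cs ds = (\<Sum>(b, z)\<leftarrow>ds. b * comb_fun k cs z)"
proof -
  have "BB k cs ds = (\<Sum>(a, x)\<leftarrow>cs. \<Sum>(b, z)\<leftarrow>ds. b * (a * k x z))"
    unfolding BB_def by (simp add: algebra_simps)
  also have "\<dots> = (\<Sum>(b, z)\<leftarrow>ds. \<Sum>(a, x)\<leftarrow>cs. b * (a * k x z))"
  proof (induction cs)
    case (Cons c cs) then show ?case by (cases c) (simp add: sum_list_map_add case_prod_beta)
  qed (simp add: case_prod_beta)
  also have "\<dots> = (\<Sum>(b, z)\<leftarrow>ds. b * comb_fun k cs z)"
    unfolding comb_fun_def by (simp add: case_prod_unfold sum_list_map_cmult)
  finally show ?thesis .
qed

lemma comb_fun_append: "comb_fun k (cs @ ds) y = comb_fun k cs y + comb_fun k ds y"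
  unfolding comb_fun_def by simp

lemma comb_fun_scl: "comb_fun k (scl c cs) y = c * comb_fun k cs y"
  unfolding comb_fun_def scl_def by (simp add: case_prod_unfold o_def sum_list_map_cmult[symmetric] algebra_simps)

lemma comb_fun_diff: "comb_fun k (comb_diff cs ds) y = comb_fun k cs y - comb_fun k ds y"
  by (simp add: comb_diff_scl comb_fun_append comb_fun_scl)

lemma comb_fun_single: "comb_fun k [(1, x)] y = k x y"
  unfolding comb_fun_def by simp

lemma BB_append1: "BB k (cs @ ds) es = BB k cs es + BB k ds es"
  unfolding BB_def by simp

lemma BB_scl1: "BB k (scl c cs) es = c * BB k cs es"
  unfolding BB_fun1 by (simp add: comb_fun_scl case_prod_unfold sum_list_map_cmult[symmetric] algebra_simps)

lemma BB_sq: "comb_sqnorm k cs = BB k cs cs"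
  unfolding comb_sqnorm_def BB_def by simp

lemma set_scl[simp]: "snd ` set (scl c cs) = snd ` set cs"
  unfolding scl_def by (induction cs) auto

lemma set_comb_diff[simp]: "snd ` set (comb_diff cs ds) = snd ` set cs \<union> snd ` set ds"
  unfolding comb_diff_scl by (simp add: image_Un)

lemma quad_disc:
  fixes a b c :: real
  assumes "\<And>s. 0 \<le> a + 2 * b * s + c * s\<^sup>2" "c \<ge> 0"
  shows "b\<^sup>2 \<le> a * c"
proof (cases "c = 0")
  case True
  show ?thesis
  proof (rule ccontr)
    assume "\<not> ?thesis"
    then have "b \<noteq> 0" using True by auto
    have "0 \<le> a + 2 * b * (- (a + 1) / (2 * b))" using assms(1)[of "- (a + 1) / (2 * b)"] True by simp
    also have "\<dots> = -1" using \<open>b \<noteq> 0\<close> by (simp add: field_simps)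
    finally show False by simp
  qed
next
  case False
  then have c: "c > 0" using assms(2) by auto
  have "0 \<le> a + 2 * b * (- b / c) + c * (- b / c)\<^sup>2" by (rule assms(1))
  also have "\<dots> = a - b\<^sup>2 / c" using c by (simp add: field_simps power2_eq_square)
  finally show ?thesis using c by (simp add: field_simps)
qed

locale rk =
  fixes X :: "'a::topological_space set" and k :: "'a \<Rightarrow> 'a \<Rightarrow> real"
  assumes pd: "pd_kernel X k"
begin

lemma sym: "x \<in> X \<Longrightarrow> y \<in> X \<Longrightarrow> k x y = k y x"
  using pd unfolding pd_kernel_def by auto

lemma psd: "set (map snd cs) \<subseteq> X \<Longrightarrow> BB k cs cs \<ge> 0"
  using pd unfolding pd_kernel_def BB_sq by auto

lemma BB_sym: assumes "set (map snd cs) \<subseteq> X" "set (map snd ds) \<subseteq> X"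
  shows "BB k cs ds = BB k ds cs"
  using assms(1)
proof (induction cs)
  case Nil then show ?case by (simp add: BB_def sum_list_map_zero case_prod_unfold)
next
  case (Cons c cs)
  obtain a x where c: "c = (a, x)" by force
  have x: "x \<in> X" using Cons.prems c by auto
  have eq: "(\<Sum>p\<leftarrow>ds. fst p * a * k (snd p) x) = (\<Sum>p\<leftarrow>ds. a * fst p * k x (snd p))"
    using assms(2) x by (intro arg_cong[where f=sum_list] map_cong) (auto simp: sym)
  have IH: "BB k cs ds = BB k ds cs" using Cons by auto
  show ?case using IH unfolding BB_def c by (simp add: case_prod_unfold sum_list_map_add eq)
qed

lemma BB_append2: assumes "set (map snd cs) \<subseteq> X" "set (map snd ds) \<subseteq> X" "set (map snd es) \<subseteq> X"
  shows "BB k cs (ds @ es) = BB k cs ds + BB k cs es"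
  using assms by (simp add: BB_sym[of cs] BB_append1)

lemma BB_scl2: assumes "set (map snd cs) \<subseteq> X" "set (map snd ds) \<subseteq> X"
  shows "BB k cs (scl c ds) = c * BB k cs ds"
  using assms by (simp add: BB_sym[of cs "scl c ds"] BB_sym[of cs ds] BB_scl1)

lemma BB_cong1: assumes "set (map snd ds) \<subseteq> X" "\<And>y. y \<in> X \<Longrightarrow> comb_fun k cs y = comb_fun k cs' y"
  shows "BB k cs ds = BB k cs' ds"
  unfolding BB_fun1 using assms by (intro arg_cong[where f=sum_list] map_cong) auto

lemma Q_cong: assumes "set (map snd cs) \<subseteq> X" "set (map snd cs') \<subseteq> X"
  "\<And>y. y \<in> X \<Longrightarrow> comb_fun k cs y = comb_fun k cs' y"
  shows "BB k cs cs = BB k cs' cs'"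
  using assms BB_cong1[of cs cs cs'] BB_cong1[of cs' cs cs'] BB_sym[of cs cs'] by auto

lemma CS: assumes "set (map snd cs) \<subseteq> X" "set (map snd ds) \<subseteq> X"
  shows "(BB k cs ds)\<^sup>2 \<le> BB k cs cs * BB k ds ds"
proof (rule quad_disc)
  fix s
  have "0 \<le> BB k (cs @ scl s ds) (cs @ scl s ds)"
    using assms by (intro psd) auto
  also have "\<dots> = BB k cs cs + 2 * BB k cs ds * s + BB k ds ds * s\<^sup>2"
    using assms by (simp add: BB_append1 BB_append2 BB_scl1 BB_scl2
         BB_sym[of ds cs] power2_eq_square algebra_simps)
  finally show "0 \<le> BB k cs cs + 2 * BB k cs ds * s + BB k ds ds * s\<^sup>2" .
  show "BB k ds ds \<ge> 0" using psd[OF assms(2)] .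
qed

definition nq where "nq cs = sqrt \<bar>BB k cs cs\<bar>"

lemma nq_nonneg: "nq cs \<ge> 0" unfolding nq_def by simp

lemma nq_sq: assumes "set (map snd cs) \<subseteq> X" shows "(nq cs)\<^sup>2 = BB k cs cs"
  unfolding nq_def using psd[OF assms] by simp

lemma CS': assumes "set (map snd cs) \<subseteq> X" "set (map snd ds) \<subseteq> X"
  shows "\<bar>BB k cs ds\<bar> \<le> nq cs * nq ds"
proof -
  have "(BB k cs ds)\<^sup>2 \<le> (nq cs * nq ds)\<^sup>2"
    using CS[OF assms] nq_sq assms by (simp add: power_mult_distrib)
  then have "\<bar>BB k cs ds\<bar>\<^sup>2 \<le> (nq cs * nq ds)\<^sup>2" by simp
  then show ?thesis using nq_nonneg by (meson power2_le_imp_le mult_nonneg_nonneg)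
qed

lemma nq_append: assumes "set (map snd cs) \<subseteq> X" "set (map snd ds) \<subseteq> X"
  shows "nq (cs @ ds) \<le> nq cs + nq ds"
proof -
  have "(nq (cs @ ds))\<^sup>2 = BB k cs cs + 2 * BB k cs ds + BB k ds ds"
    using assms by (simp add: nq_sq BB_append1 BB_append2 BB_sym[of ds cs])
  also have "\<dots> \<le> (nq cs)\<^sup>2 + 2 * (nq cs * nq ds) + (nq ds)\<^sup>2"
    using CS'[OF assms] assms nq_sq by simp
  also have "\<dots> = (nq cs + nq ds)\<^sup>2" by (simp add: power2_eq_square algebra_simps)
  finally show ?thesis using nq_nonneg by (meson add_nonneg_nonneg power2_le_imp_le)
qed

lemma nq_scl: assumes "set (map snd cs) \<subseteq> X" shows "nq (scl c cs) = \<bar>c\<bar> * nq cs"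
proof -
  have "BB k (scl c cs) (scl c cs) = c\<^sup>2 * BB k cs cs"
    using assms by (simp add: BB_scl1 BB_sym[of cs "scl c cs"] power2_eq_square)
  then show ?thesis unfolding nq_def by (simp add: real_sqrt_mult abs_mult)
qed

lemma nq_cong: assumes "set (map snd cs) \<subseteq> X" "set (map snd cs') \<subseteq> X"
  "\<And>y. y \<in> X \<Longrightarrow> comb_fun k cs y = comb_fun k cs' y"
  shows "nq cs = nq cs'"
  unfolding nq_def using Q_cong[OF assms] by simp

lemma nq_diff: assumes "set (map snd cs) \<subseteq> X" "set (map snd ds) \<subseteq> X"
  shows "nq (comb_diff cs ds) \<le> nq cs + nq ds"
  using nq_append[of cs "scl (-1) ds"] assms nq_scl[of ds "-1"]
  by (simp add: comb_diff_scl set_scl)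

lemma nq_rev: assumes "set (map snd cs) \<subseteq> X" "set (map snd ds) \<subseteq> X"
  shows "\<bar>nq cs - nq ds\<bar> \<le> nq (comb_diff cs ds)"
proof -
  have 1: "nq cs \<le> nq (comb_diff cs ds) + nq ds"
  proof -
    have "nq cs = nq (comb_diff cs ds @ ds)"
      using assms by (intro nq_cong) (auto simp: set_comb_diff comb_fun_append comb_fun_diff)
    also have "\<dots> \<le> nq (comb_diff cs ds) + nq ds"
      using assms by (intro nq_append) (auto simp: set_comb_diff)
    finally show ?thesis .
  qed
  have 2: "nq ds \<le> nq (comb_diff cs ds) + nq cs"
  proof -
    have "nq ds = nq (scl (-1) (comb_diff cs ds) @ cs)"
      using assms by (intro nq_cong) (auto simp: set_comb_diff comb_fun_append comb_fun_diff comb_fun_scl set_scl)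
    also have "\<dots> \<le> nq (scl (-1) (comb_diff cs ds)) + nq cs"
      using assms by (intro nq_append) (auto simp: set_comb_diff set_scl)
    also have "nq (scl (-1) (comb_diff cs ds)) = nq (comb_diff cs ds)"
      using assms by (subst nq_scl) (auto simp: set_comb_diff)
    finally show ?thesis .
  qed
  from 1 2 show ?thesis by linarith
qed

lemma nq_comb_sqnorm: "set (map snd cs) \<subseteq> X \<Longrightarrow> sqrt (comb_sqnorm k cs) = nq cs"
  unfolding nq_def BB_sq using psd by simp

lemma approx_nq:
  assumes "rkhs_approx X k F f"
  shows "\<And>n. set (map snd (F n)) \<subseteq> X"
    and "\<And>e. e > 0 \<Longrightarrow> \<exists>N. \<forall>m\<ge>N. \<forall>n\<ge>N. nq (comb_diff (F m) (F n)) < e"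
    and "\<And>y. y \<in> X \<Longrightarrow> (\<lambda>n. comb_fun k (F n) y) \<longlonglongrightarrow> f y"
proof -
  show S: "\<And>n. set (map snd (F n)) \<subseteq> X" using assms unfolding rkhs_approx_def by auto
  show "\<And>y. y \<in> X \<Longrightarrow> (\<lambda>n. comb_fun k (F n) y) \<longlonglongrightarrow> f y" using assms unfolding rkhs_approx_def by auto
  fix e :: real assume e: "e > 0"
  then obtain N where N: "\<forall>m\<ge>N. \<forall>n\<ge>N. comb_sqnorm k (comb_diff (F m) (F n)) < e\<^sup>2"
    using assms unfolding rkhs_approx_def by (meson zero_less_power)
  have "\<forall>m\<ge>N. \<forall>n\<ge>N. nq (comb_diff (F m) (F n)) < e"
  proof (intro allI impI)
    fix m n assume "m \<ge> N" "n \<ge> N"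
    then have "comb_sqnorm k (comb_diff (F m) (F n)) < e\<^sup>2" using N by auto
    then have "sqrt (comb_sqnorm k (comb_diff (F m) (F n))) < e" using real_sqrt_less_mono e
      by fastforce
    then show "nq (comb_diff (F m) (F n)) < e" using S
      by (subst (asm) nq_comb_sqnorm) (auto simp: image_Un)
  qed
  then show "\<exists>N. \<forall>m\<ge>N. \<forall>n\<ge>N. nq (comb_diff (F m) (F n)) < e" by blast
qed

lemma approx_nqI:
  assumes S: "\<And>n. set (map snd (F n)) \<subseteq> X"
    and C: "\<And>e. e > 0 \<Longrightarrow> \<exists>N. \<forall>m\<ge>N. \<forall>n\<ge>N. nq (comb_diff (F m) (F n)) < e"
    and L: "\<And>y. y \<in> X \<Longrightarrow> (\<lambda>n. comb_fun k (F n) y) \<longlonglongrightarrow> f y"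
  shows "rkhs_approx X k F f"
  unfolding rkhs_approx_def
proof (intro conjI allI impI ballI)
  show "set (map snd (F n)) \<subseteq> X" for n using S .
  show "(\<lambda>n. comb_fun k (F n) y) \<longlonglongrightarrow> f y" if "y \<in> X" for y using L that .
  fix e :: real assume e: "e > 0"
  then obtain N where N: "\<forall>m\<ge>N. \<forall>n\<ge>N. nq (comb_diff (F m) (F n)) < sqrt e"
    using C by (meson real_sqrt_gt_zero)
  have "\<forall>m\<ge>N. \<forall>n\<ge>N. comb_sqnorm k (comb_diff (F m) (F n)) < e"
  proof (intro allI impI)
    fix m n assume "m \<ge> N" "n \<ge> N"
    then have 1: "nq (comb_diff (F m) (F n)) < sqrt e" using N by auto
    have 2: "comb_sqnorm k (comb_diff (F m) (F n)) = (nq (comb_diff (F m) (F n)))\<^sup>2"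
      using S by (subst nq_sq) (auto simp: BB_sq image_Un)
    show "comb_sqnorm k (comb_diff (F m) (F n)) < e"
      unfolding 2 using 1 e nq_nonneg
      by (metis real_sqrt_less_iff real_sqrt_pow2_iff real_sqrt_power less_le_not_le power2_less_imp_less real_less_rsqrt)
  qed
  then show "\<exists>N. \<forall>m\<ge>N. \<forall>n\<ge>N. comb_sqnorm k (comb_diff (F m) (F n)) < e" by blast
qed

lemma nq_convergent:
  assumes "rkhs_approx X k F f"
  shows "convergent (\<lambda>n. nq (F n))"
proof -
  note A = approx_nq[OF assms]
  have "Cauchy (\<lambda>n. nq (F n))"
  proof (rule metric_CauchyI)
    fix e :: real assume "e > 0"
    then obtain N where N: "\<forall>m\<ge>N. \<forall>n\<ge>N. nq (comb_diff (F m) (F n)) < e" using A(2) by blast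
    have "\<forall>m\<ge>N. \<forall>n\<ge>N. dist (nq (F m)) (nq (F n)) < e"
      using N nq_rev[OF A(1) A(1)] unfolding dist_real_def by (meson le_less_trans)
    then show "\<exists>M. \<forall>m\<ge>M. \<forall>n\<ge>M. dist (nq (F m)) (nq (F n)) < e" by blast
  qed
  then show ?thesis by (simp add: Cauchy_convergent_iff)
qed

lemma tendsto_sum_list_zero:
  fixes f :: "nat \<Rightarrow> 'b \<Rightarrow> real"
  assumes "\<And>p. p \<in> set l \<Longrightarrow> (\<lambda>n. f n p) \<longlonglongrightarrow> 0"
  shows "(\<lambda>n. \<Sum>p\<leftarrow>l. f n p) \<longlonglongrightarrow> 0"
  using assms by (induction l) (auto intro!: tendsto_add_zero)

lemma zero_lemma:
  assumes F: "rkhs_approx X k F f" and f0: "\<And>y. y \<in> X \<Longrightarrow> f y = 0"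
  shows "(\<lambda>n. nq (F n)) \<longlonglongrightarrow> 0"
proof -
  note A = approx_nq[OF F]
  obtain Mb where Mb: "Mb > 0" "\<And>n. norm (nq (F n)) \<le> Mb"
    using convergent_imp_Bseq[OF nq_convergent[OF F]] by (auto elim: BseqE)
  have "(\<lambda>n. BB k (F n) (F n)) \<longlonglongrightarrow> 0"
  proof (rule LIMSEQ_I)
    fix r :: real assume r: "r > 0"
    define e where "e = r / (2 * Mb)"
    have e: "e > 0" using r Mb by (simp add: e_def)
    obtain N where N: "\<forall>m\<ge>N. \<forall>n\<ge>N. nq (comb_diff (F m) (F n)) < e" using A(2)[OF e] by blast
    have "(\<lambda>n. BB k (F N) (F n)) \<longlonglongrightarrow> 0"
    proof -
      have eq: "BB k (F N) (F n) = (\<Sum>p\<leftarrow>F N. fst p * comb_fun k (F n) (snd p))" for n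
        using A(1) by (subst BB_sym) (auto simp: BB_fun1 case_prod_unfold)
      have "(\<lambda>n. \<Sum>p\<leftarrow>F N. fst p * comb_fun k (F n) (snd p)) \<longlonglongrightarrow> 0"
      proof (rule tendsto_sum_list_zero)
        fix p assume "p \<in> set (F N)"
        then have "snd p \<in> X" using A(1)[of N] by auto
        then have "(\<lambda>n. comb_fun k (F n) (snd p)) \<longlonglongrightarrow> 0" using A(3) f0 by force
        then show "(\<lambda>n. fst p * comb_fun k (F n) (snd p)) \<longlonglongrightarrow> 0"
          by (simp add: tendsto_mult_right_zero)
      qed
      then show ?thesis unfolding eq .
    qed
    from LIMSEQ_D[OF this, of "r / 2"] r
    obtain n0 where n0: "\<forall>n\<ge>n0. norm (BB k (F N) (F n)) < r / 2" by auto
    have "\<forall>n\<ge>max N n0. norm (BB k (F n) (F n) - 0) < r"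
    proof (intro allI impI)
      fix n assume n: "n \<ge> max N n0"
      have "BB k (F n) (F n) = BB k (comb_diff (F n) (F N) @ F N) (F n)"
        using A(1) by (intro BB_cong1) (auto simp: comb_fun_append comb_fun_diff)
      also have "\<dots> = BB k (comb_diff (F n) (F N)) (F n) + BB k (F N) (F n)" by (simp add: BB_append1)
      finally have eq: "BB k (F n) (F n) = BB k (comb_diff (F n) (F N)) (F n) + BB k (F N) (F n)" .
      have "\<bar>BB k (comb_diff (F n) (F N)) (F n)\<bar> \<le> nq (comb_diff (F n) (F N)) * nq (F n)"
        using A(1) by (intro CS') (auto simp: image_Un)
      also have "\<dots> \<le> nq (comb_diff (F n) (F N)) * Mb"
        using Mb(2)[of n] nq_nonneg by (intro mult_left_mono) auto
      also have "\<dots> \<le> e * Mb"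
        using N n Mb(1) by (intro mult_right_mono) (auto intro: less_imp_le)
      also have "\<dots> = r / 2" using Mb(1) by (simp add: e_def)
      finally have 1: "\<bar>BB k (comb_diff (F n) (F N)) (F n)\<bar> \<le> r / 2" .
      have 2: "\<bar>BB k (F N) (F n)\<bar> < r / 2" using n0 n by auto
      show "norm (BB k (F n) (F n) - 0) < r" unfolding eq using 1 2 by simp
    qed
    then show "\<exists>no. \<forall>n\<ge>no. norm (BB k (F n) (F n) - 0) < r" by blast
  qed
  then have "(\<lambda>n. sqrt \<bar>BB k (F n) (F n)\<bar>) \<longlonglongrightarrow> sqrt \<bar>0\<bar>"
    by (intro tendsto_real_sqrt tendsto_rabs)
  then show ?thesis by (simp add: nq_def)
qed

lemma approx_diff:
  assumes F: "rkhs_approx X k F f" and G: "rkhs_approx X k G g"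
  shows "rkhs_approx X k (\<lambda>n. comb_diff (F n) (G n)) (\<lambda>x. f x - g x)"
proof (rule approx_nqI)
  note A = approx_nq[OF F] and B = approx_nq[OF G]
  show "set (map snd (comb_diff (F n) (G n))) \<subseteq> X" for n using A(1) B(1) by (auto simp: image_Un)
  show "(\<lambda>n. comb_fun k (comb_diff (F n) (G n)) y) \<longlonglongrightarrow> f y - g y" if "y \<in> X" for y
    unfolding comb_fun_diff using A(3)[OF that] B(3)[OF that] by (rule tendsto_diff)
  fix e :: real assume e: "e > 0"
  obtain N1 where N1: "\<forall>m\<ge>N1. \<forall>n\<ge>N1. nq (comb_diff (F m) (F n)) < e / 2" using A(2) e half_gt_zero by blast
  obtain N2 where N2: "\<forall>m\<ge>N2. \<forall>n\<ge>N2. nq (comb_diff (G m) (G n)) < e / 2" using B(2) e half_gt_zero by blast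
  have "\<forall>m\<ge>max N1 N2. \<forall>n\<ge>max N1 N2. nq (comb_diff (comb_diff (F m) (G m)) (comb_diff (F n) (G n))) < e"
  proof (intro allI impI)
    fix m n assume mn: "m \<ge> max N1 N2" "n \<ge> max N1 N2"
    have "nq (comb_diff (comb_diff (F m) (G m)) (comb_diff (F n) (G n)))
        = nq (comb_diff (comb_diff (F m) (F n)) (comb_diff (G m) (G n)))"
      using A(1) B(1) by (intro nq_cong) (auto simp: image_Un comb_fun_diff)
    also have "\<dots> \<le> nq (comb_diff (F m) (F n)) + nq (comb_diff (G m) (G n))"
      using A(1) B(1) by (intro nq_diff) (auto simp: image_Un)
    also have "\<dots> < e / 2 + e / 2" using N1 N2 mn by (intro add_strict_mono) auto
    finally show "nq (comb_diff (comb_diff (F m) (G m)) (comb_diff (F n) (G n))) < e" by simp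
  qed
  then show "\<exists>N. \<forall>m\<ge>N. \<forall>n\<ge>N. nq (comb_diff (comb_diff (F m) (G m)) (comb_diff (F n) (G n))) < e" by blast
qed

lemma rkhs_diff: "f \<in> rkhs X k \<Longrightarrow> g \<in> rkhs X k \<Longrightarrow> (\<lambda>x. f x - g x) \<in> rkhs X k"
  unfolding rkhs_def using approx_diff by blast

lemma lim_unique:
  assumes F: "rkhs_approx X k F f" and G: "rkhs_approx X k G f"
    and "(\<lambda>n. nq (F n)) \<longlonglongrightarrow> a" "(\<lambda>n. nq (G n)) \<longlonglongrightarrow> b"
  shows "a = b"
proof -
  have H: "rkhs_approx X k (\<lambda>n. comb_diff (F n) (G n)) (\<lambda>x. f x - f x)" by (rule approx_diff[OF F G])
  have 0: "(\<lambda>n. nq (comb_diff (F n) (G n))) \<longlonglongrightarrow> 0" by (rule zero_lemma[OF H]) simp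
  have "(\<lambda>n. nq (F n) - nq (G n)) \<longlonglongrightarrow> 0"
    using approx_nq(1)[OF F] approx_nq(1)[OF G] nq_rev
    by (intro Lim_null_comparison[OF _ 0]) (auto simp: real_norm_def)
  moreover have "(\<lambda>n. nq (F n) - nq (G n)) \<longlonglongrightarrow> a - b" using assms(3,4) by (rule tendsto_diff)
  ultimately show ?thesis using LIMSEQ_unique by fastforce
qed

lemma rkhs_norm_lim:
  assumes F: "rkhs_approx X k F f"
  shows "(\<lambda>n. nq (F n)) \<longlonglongrightarrow> rkhs_norm X k f"
proof -
  have eq: "\<And>G. rkhs_approx X k G f \<Longrightarrow> (\<lambda>n. sqrt (comb_sqnorm k (G n))) = (\<lambda>n. nq (G n))"
    using approx_nq(1) nq_comb_sqnorm by auto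
  obtain L where L: "(\<lambda>n. nq (F n)) \<longlonglongrightarrow> L" using nq_convergent[OF F] by (auto simp: convergent_def)
  have "rkhs_norm X k f = L"
    unfolding rkhs_norm_def
  proof (rule the_equality)
    show "\<exists>F. rkhs_approx X k F f \<and> (\<lambda>n. sqrt (comb_sqnorm k (F n))) \<longlonglongrightarrow> L"
      using F L eq by auto
    fix r assume "\<exists>G. rkhs_approx X k G f \<and> (\<lambda>n. sqrt (comb_sqnorm k (G n))) \<longlonglongrightarrow> r"
    then obtain G where G: "rkhs_approx X k G f" "(\<lambda>n. nq (G n)) \<longlonglongrightarrow> r" using eq by auto
    show "r = L" using lim_unique[OF G(1) F G(2) L] .
  qed
  then show ?thesis using L by simp
qed

lemma kxx_nonneg: "y \<in> X \<Longrightarrow> k y y \<ge> 0"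
  using psd[of "[(1, y)]"] by (simp add: BB_def)

lemma rkhs_norm_nonneg: "f \<in> rkhs X k \<Longrightarrow> rkhs_norm X k f \<ge> 0"
proof -
  assume "f \<in> rkhs X k"
  then obtain F where F: "rkhs_approx X k F f" unfolding rkhs_def by auto
  show ?thesis by (rule LIMSEQ_le_const[OF rkhs_norm_lim[OF F]]) (auto intro: nq_nonneg)
qed

lemma rkhs_bound:
  assumes f: "f \<in> rkhs X k" and y: "y \<in> X"
  shows "\<bar>f y\<bar> \<le> rkhs_norm X k f * sqrt (k y y)"
proof -
  obtain F where F: "rkhs_approx X k F f" using f unfolding rkhs_def by auto
  note A = approx_nq[OF F]
  have "\<bar>comb_fun k (F n) y\<bar> \<le> nq (F n) * sqrt (k y y)" for n
  proof -
    have "comb_fun k (F n) y = BB k (F n) [(1, y)]" by (simp add: BB_fun1)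
    moreover have "nq [(1, y)] = sqrt (k y y)" using kxx_nonneg[OF y] by (simp add: nq_def BB_def)
    ultimately show ?thesis using CS'[of "F n" "[(1, y)]"] A(1) y by simp
  qed
  moreover have "(\<lambda>n. \<bar>comb_fun k (F n) y\<bar>) \<longlonglongrightarrow> \<bar>f y\<bar>" using A(3)[OF y] by (rule tendsto_rabs)
  moreover have "(\<lambda>n. nq (F n) * sqrt (k y y)) \<longlonglongrightarrow> rkhs_norm X k f * sqrt (k y y)"
    using rkhs_norm_lim[OF F] by (rule tendsto_mult_right)
  ultimately show ?thesis by (intro LIMSEQ_le) auto
qed

end


lemma continuous_on_comb_fun:
  assumes k: "continuous_on (X \<times> X) (\<lambda>(x, y). k x y)" and S: "set (map snd cs) \<subseteq> X"
  shows "continuous_on X (comb_fun k cs)"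
  using S
proof (induction cs)
  case Nil then show ?case by (simp add: comb_fun_def)
next
  case (Cons c cs)
  obtain a x where c: "c = (a, x)" by force
  have x: "x \<in> X" using Cons.prems c by auto
  have "continuous_on X (\<lambda>y. (\<lambda>(x, y). k x y) (x, y))"
    by (rule continuous_on_compose2[OF k]) (auto intro!: continuous_intros simp: x)
  then have 1: "continuous_on X (\<lambda>y. a * k x y)" by (auto intro!: continuous_intros)
  have 2: "continuous_on X (comb_fun k cs)" using Cons by auto
  have "comb_fun k (c # cs) = (\<lambda>y. a * k x y + comb_fun k cs y)"
    by (auto simp: comb_fun_def c)
  then show ?case using continuous_on_add[OF 1 2] by simp
qed

locale kp = rk X k for X :: "'a::euclidean_space set" and k +
  fixes \<mu> :: "'a measure" and R :: "'a \<Rightarrow> 'a measure"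
  assumes mu_prob: "prob_space \<mu>"
    and mu_sets: "sets \<mu> = sets (restrict_space borel X)"
    and R_kernel: "R \<in> \<mu> \<rightarrow>\<^sub>M prob_algebra \<mu>"
    and R_inv: "\<And>A. A \<in> sets \<mu> \<Longrightarrow> (\<integral>\<^sup>+ x. emeasure (R x) A \<partial>\<mu>) = emeasure \<mu> A"
    and A1: "square_integrable \<mu> (\<lambda>x. k x x)"
begin

lemma space_mu: "space \<mu> = X"
  using sets_eq_imp_space_eq[OF mu_sets] by (simp add: space_restrict_space)

lemma R_sub: "R \<in> \<mu> \<rightarrow>\<^sub>M subprob_algebra \<mu>"
  using R_kernel by (rule measurable_prob_algebraD)

lemma R_x: assumes "x \<in> X" shows "prob_space (R x)" "sets (R x) = sets \<mu>" "space (R x) = X"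
proof -
  have "R x \<in> space (prob_algebra \<mu>)" using measurable_space[OF R_kernel] assms space_mu by auto
  then show "prob_space (R x)" "sets (R x) = sets \<mu>" by (auto simp: space_prob_algebra)
  then show "space (R x) = X" using sets_eq_imp_space_eq space_mu by metis
qed

lemma X_ne: "X \<noteq> {}"
  using prob_space.not_empty[OF mu_prob] space_mu by auto

lemma bind_eq: "\<mu> \<bind> R = \<mu>"
proof (rule measure_eqI)
  show S: "sets (\<mu> \<bind> R) = sets \<mu>"
    using R_x(2) X_ne space_mu by (intro sets_bind) auto
  fix A assume "A \<in> sets (\<mu> \<bind> R)"
  then have A: "A \<in> sets \<mu>" using S by simp
  show "emeasure (\<mu> \<bind> R) A = emeasure \<mu> A"
    using emeasure_bind[OF _ R_sub A] X_ne space_mu R_inv[OF A] by auto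
qed

lemma inv_nn: assumes "f \<in> borel_measurable \<mu>"
  shows "(\<integral>\<^sup>+x. \<integral>\<^sup>+y. f y \<partial>R x \<partial>\<mu>) = (\<integral>\<^sup>+x. f x \<partial>\<mu>)"
  using nn_integral_bind[OF assms R_sub] bind_eq by simp

lemma meas_R: assumes "f \<in> borel_measurable \<mu>" "x \<in> X" shows "f \<in> borel_measurable (R x)"
  using assms R_x(2) measurable_cong_sets by blast

lemma meas_cont: assumes "continuous_on X g" shows "g \<in> borel_measurable \<mu>"
  using borel_measurable_continuous_on_restrict[OF assms] measurable_cong_sets[OF mu_sets refl] by blast

lemma k_cont: "continuous_on (X \<times> X) (\<lambda>(x, y). k x y)"
  using pd unfolding pd_kernel_def by auto

lemma rkhs_meas: assumes "f \<in> rkhs X k" shows "f \<in> borel_measurable \<mu>"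
proof -
  obtain F where F: "rkhs_approx X k F f" using assms unfolding rkhs_def by auto
  note A = approx_nq[OF F]
  show ?thesis
  proof (rule borel_measurable_LIMSEQ_real)
    show "\<And>x. x \<in> space \<mu> \<Longrightarrow> (\<lambda>i. comb_fun k (F i) x) \<longlonglongrightarrow> f x" using A(3) space_mu by auto
    show "\<And>i. comb_fun k (F i) \<in> borel_measurable \<mu>"
      using A(1) by (intro meas_cont continuous_on_comb_fun[OF k_cont])
  qed
qed

lemma kcol_meas: assumes "y \<in> X" shows "(\<lambda>x. k x y) \<in> borel_measurable \<mu>"
proof -
  have "continuous_on X (comb_fun k [(1, y)])" using assms by (intro continuous_on_comb_fun[OF k_cont]) auto
  then have "continuous_on X (\<lambda>x. k x y)"
    using assms by (subst continuous_on_cong[OF refl, where g="comb_fun k [(1, y)]"]) (auto simp: comb_fun_single sym)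
  then show ?thesis by (rule meas_cont)
qed

lemma kxx_meas[measurable]: "(\<lambda>x. k x x) \<in> borel_measurable \<mu>"
  using A1 unfolding square_integrable_def by auto

lemma kxx_int: "integrable \<mu> (\<lambda>x. k x x)"
proof -
  interpret prob_space \<mu> by (rule mu_prob)
  show ?thesis using square_integrable_imp_integrable[OF kxx_meas] A1
    unfolding square_integrable_def by auto
qed

definition s where "s x = sqrt \<bar>k x x\<bar>"
definition P where "P x = (\<integral>\<^sup>+z. ennreal (s z) \<partial>R x)"

lemma kxy_bound: assumes "x \<in> X" "y \<in> X" shows "\<bar>k x y\<bar> \<le> s x * s y"
proof -
  have "\<bar>BB k [(1, x)] [(1, y)]\<bar> \<le> nq [(1, x)] * nq [(1, y)]" using assms by (intro CS') auto
  then show ?thesis by (simp add: BB_def nq_def s_def)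
qed

lemma s_meas[measurable]: "s \<in> borel_measurable \<mu>"
  unfolding s_def by (rule measurable_compose[OF borel_measurable_abs[OF kxx_meas] borel_measurable_sqrt])

lemma s_sq: "x \<in> X \<Longrightarrow> (s x)\<^sup>2 = k x x" unfolding s_def using kxx_nonneg by simp

lemma s_nonneg: "s x \<ge> 0" unfolding s_def by simp

lemma P_meas[measurable]: "P \<in> borel_measurable \<mu>"
proof -
  have "(\<lambda>z. ennreal (s z)) \<in> borel_measurable \<mu>" by (intro measurable_compose[OF s_meas] measurable_ennreal)
  then show ?thesis unfolding P_def by (rule measurable_compose[OF R_sub nn_integral_measurable_subprob_algebra])
qed

lemma nn_kxx_fin: "(\<integral>\<^sup>+x. ennreal (k x x) \<partial>\<mu>) < \<infinity>"
proof -
  have "(\<integral>\<^sup>+x. ennreal (k x x) \<partial>\<mu>) = (\<integral>\<^sup>+x. norm (k x x) \<partial>\<mu>)"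
    using kxx_nonneg space_mu by (intro nn_integral_cong) auto
  then show ?thesis using kxx_int unfolding integrable_iff_bounded by simp
qed

lemma P_sq: assumes "x \<in> X" shows "(P x)\<^sup>2 \<le> (\<integral>\<^sup>+z. ennreal (k z z) \<partial>R x)"
proof -
  have m: "(\<lambda>z. ennreal (s z)) \<in> borel_measurable (R x)" by (intro measurable_compose[OF meas_R[OF s_meas assms]] measurable_ennreal)
  have "(P x)\<^sup>2 = (\<integral>\<^sup>+z. ennreal (s z) * 1 \<partial>R x)\<^sup>2" by (simp add: P_def)
  also have "\<dots> \<le> (\<integral>\<^sup>+z. (ennreal (s z))\<^sup>2 \<partial>R x) * (\<integral>\<^sup>+z. 1 ^ 2 \<partial>R x)"
    by (rule Cauchy_Schwarz_nn_integral[OF m]) simp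
  also have "(\<integral>\<^sup>+z. 1 ^ 2 \<partial>R x) = 1"
    using prob_space.emeasure_space_1[OF R_x(1)[OF assms]] by simp
  also have "(\<integral>\<^sup>+z. (ennreal (s z))\<^sup>2 \<partial>R x) = (\<integral>\<^sup>+z. ennreal (k z z) \<partial>R x)"
    using R_x(3)[OF assms] s_sq s_nonneg by (intro nn_integral_cong) (auto simp: ennreal_power)
  finally show ?thesis by simp
qed

lemma P_sq_int: "(\<integral>\<^sup>+x. (P x)\<^sup>2 \<partial>\<mu>) \<le> (\<integral>\<^sup>+x. ennreal (k x x) \<partial>\<mu>)"
proof -
  have "(\<integral>\<^sup>+x. (P x)\<^sup>2 \<partial>\<mu>) \<le> (\<integral>\<^sup>+x. \<integral>\<^sup>+z. ennreal (k z z) \<partial>R x \<partial>\<mu>)"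
    using P_sq space_mu by (intro nn_integral_mono) auto
  also have "\<dots> = (\<integral>\<^sup>+x. ennreal (k x x) \<partial>\<mu>)" by (rule inv_nn) measurable
  finally show ?thesis .
qed

lemma P_sq_fin: "(\<integral>\<^sup>+x. (P x)\<^sup>2 \<partial>\<mu>) < \<infinity>"
  using P_sq_int nn_kxx_fin by (rule le_less_trans)

lemma Ps_fin: "(\<integral>\<^sup>+x. P x * ennreal (s x) \<partial>\<mu>) < \<infinity>"
proof -
  have "(\<integral>\<^sup>+x. P x * ennreal (s x) \<partial>\<mu>)\<^sup>2 \<le> (\<integral>\<^sup>+x. (P x)\<^sup>2 \<partial>\<mu>) * (\<integral>\<^sup>+x. (ennreal (s x))\<^sup>2 \<partial>\<mu>)"
    by (rule Cauchy_Schwarz_nn_integral) measurable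
  also have "(\<integral>\<^sup>+x. (ennreal (s x))\<^sup>2 \<partial>\<mu>) = (\<integral>\<^sup>+x. ennreal (k x x) \<partial>\<mu>)"
    using space_mu s_sq s_nonneg by (intro nn_integral_cong) (auto simp: ennreal_power)
  also have "(\<integral>\<^sup>+x. (P x)\<^sup>2 \<partial>\<mu>) * (\<integral>\<^sup>+x. ennreal (k x x) \<partial>\<mu>) < \<infinity>"
    using P_sq_fin nn_kxx_fin by (simp add: ennreal_mult_less_top)
  finally show ?thesis by (simp add: power_less_top_ennreal)
qed

lemma AE_P_fin: "AE x in \<mu>. P x < \<infinity>"
proof -
  have "AE x in \<mu>. (P x)\<^sup>2 \<noteq> \<infinity>" using P_sq_fin by (intro nn_integral_PInf_AE) auto
  then show ?thesis by eventually_elim (simp add: power_less_top_ennreal top.not_eq_extremum)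
qed

lemma enn_bound: "0 \<le> c \<Longrightarrow> \<bar>a\<bar> \<le> c * s z \<Longrightarrow> ennreal (norm a) \<le> ennreal c * ennreal (s z)"
  by (subst ennreal_mult[symmetric]) (auto simp: s_nonneg intro: ennreal_leI)

definition dom where "dom f c \<longleftrightarrow> f \<in> borel_measurable \<mu> \<and> c \<ge> 0 \<and> (\<forall>x\<in>X. \<bar>f x\<bar> \<le> c * s x)"

lemma rkhs_dom: assumes "f \<in> rkhs X k" shows "dom f (rkhs_norm X k f)"
  unfolding dom_def using rkhs_meas[OF assms] rkhs_norm_nonneg[OF assms] rkhs_bound[OF assms]
    kxx_nonneg by (auto simp: s_def)

lemma K_meas: assumes "f \<in> borel_measurable \<mu>" shows "koopman R f \<in> borel_measurable \<mu>"
  unfolding koopman_def by (rule measurable_compose[OF R_sub integral_measurable_subprob_algebra[OF assms]])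

lemma ennreal_s_meas[measurable]: "(\<lambda>x. ennreal (s x)) \<in> borel_measurable \<mu>"
  by (intro measurable_compose[OF s_meas] measurable_ennreal)

lemma K_bound: assumes d: "dom f c" and x: "x \<in> X"
  shows "ennreal \<bar>koopman R f x\<bar> \<le> ennreal c * P x"
proof (cases "integrable (R x) f")
  case True
  have "ennreal \<bar>koopman R f x\<bar> = ennreal (norm (integral\<^sup>L (R x) f))" by (simp add: koopman_def)
  also have "\<dots> \<le> (\<integral>\<^sup>+z. norm (f z) \<partial>R x)" by (rule integral_norm_bound_ennreal[OF True])
  also have "\<dots> \<le> (\<integral>\<^sup>+z. ennreal c * ennreal (s z) \<partial>R x)"
    using d R_x(3)[OF x] unfolding dom_def by (intro nn_integral_mono enn_bound) auto
  also have "\<dots> = ennreal c * P x" unfolding P_def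
    by (rule nn_integral_cmult) (intro measurable_compose[OF meas_R[OF s_meas x]] measurable_ennreal)
  finally show ?thesis .
next
  case False
  then show ?thesis by (simp add: koopman_def not_integrable_integral_eq)
qed

lemma K_int_AE: assumes d: "dom f c" shows "AE x in \<mu>. integrable (R x) f"
  using AE_P_fin AE_space
proof eventually_elim
  case (elim x)
  then have x: "x \<in> X" using space_mu by auto
  have "(\<integral>\<^sup>+z. norm (f z) \<partial>R x) \<le> (\<integral>\<^sup>+z. ennreal c * ennreal (s z) \<partial>R x)"
    using d R_x(3)[OF x] unfolding dom_def by (intro nn_integral_mono enn_bound) auto
  also have "\<dots> = ennreal c * P x" unfolding P_def
    by (rule nn_integral_cmult) (intro measurable_compose[OF meas_R[OF s_meas x]] measurable_ennreal)
  also have "\<dots> < \<infinity>" using elim by (simp add: ennreal_mult_less_top)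
  finally show ?case using d meas_R[OF _ x] unfolding dom_def integrable_iff_bounded by auto
qed

lemma K_kint_nn: assumes d: "dom f c" and y: "y \<in> X"
  shows "(\<integral>\<^sup>+x. norm (koopman R f x * k x y) \<partial>\<mu>) \<le> ennreal c * ennreal (s y) * (\<integral>\<^sup>+x. P x * ennreal (s x) \<partial>\<mu>)"
proof -
  have "(\<integral>\<^sup>+x. norm (koopman R f x * k x y) \<partial>\<mu>) \<le> (\<integral>\<^sup>+x. (ennreal c * ennreal (s y)) * (P x * ennreal (s x)) \<partial>\<mu>)"
  proof (rule nn_integral_mono)
    fix x assume "x \<in> space \<mu>"
    then have x: "x \<in> X" using space_mu by auto
    have "ennreal (norm (koopman R f x * k x y)) = ennreal \<bar>koopman R f x\<bar> * ennreal \<bar>k x y\<bar>"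
      by (simp add: abs_mult ennreal_mult)
    also have "\<dots> \<le> (ennreal c * P x) * ennreal (s x * s y)"
      using K_bound[OF d x] kxy_bound[OF x y] by (intro mult_mono) auto
    also have "\<dots> = (ennreal c * ennreal (s y)) * (P x * ennreal (s x))"
      using s_nonneg by (simp add: ennreal_mult ac_simps)
    finally show "ennreal (norm (koopman R f x * k x y)) \<le> (ennreal c * ennreal (s y)) * (P x * ennreal (s x))" .
  qed
  also have "\<dots> = ennreal c * ennreal (s y) * (\<integral>\<^sup>+x. P x * ennreal (s x) \<partial>\<mu>)"
    by (rule nn_integral_cmult) measurable
  finally show ?thesis .
qed

lemma K_kint: assumes d: "dom f c" and y: "y \<in> X"
  shows "integrable \<mu> (\<lambda>x. koopman R f x * k x y)"
  unfolding integrable_iff_bounded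
proof
  show "(\<lambda>x. koopman R f x * k x y) \<in> borel_measurable \<mu>"
    using K_meas kcol_meas[OF y] d unfolding dom_def by (intro borel_measurable_times) auto
  have "ennreal c * ennreal (s y) * (\<integral>\<^sup>+x. P x * ennreal (s x) \<partial>\<mu>) < \<infinity>"
    using Ps_fin by (simp add: ennreal_mult_less_top)
  then show "(\<integral>\<^sup>+x. norm (koopman R f x * k x y) \<partial>\<mu>) < \<infinity>"
    using K_kint_nn[OF d y] by (rule le_less_trans[rotated])
qed

lemma K_sqint: assumes d: "dom f c" shows "square_integrable \<mu> (koopman R f)"
  unfolding square_integrable_def
proof
  show m: "koopman R f \<in> borel_measurable \<mu>" using K_meas d unfolding dom_def by auto
  show "integrable \<mu> (\<lambda>x. (koopman R f x)\<^sup>2)"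
    unfolding integrable_iff_bounded
  proof
    show "(\<lambda>x. (koopman R f x)\<^sup>2) \<in> borel_measurable \<mu>" using m by measurable
    have "(\<integral>\<^sup>+x. norm ((koopman R f x)\<^sup>2) \<partial>\<mu>) \<le> (\<integral>\<^sup>+x. (ennreal c)\<^sup>2 * (P x)\<^sup>2 \<partial>\<mu>)"
    proof (rule nn_integral_mono)
      fix x assume "x \<in> space \<mu>"
      then have x: "x \<in> X" using space_mu by auto
      have "ennreal (norm ((koopman R f x)\<^sup>2)) = (ennreal \<bar>koopman R f x\<bar>)\<^sup>2"
        by (simp add: ennreal_power)
      also have "\<dots> \<le> (ennreal c * P x)\<^sup>2" using K_bound[OF d x] by (rule power_mono) simp
      finally show "ennreal (norm ((koopman R f x)\<^sup>2)) \<le> (ennreal c)\<^sup>2 * (P x)\<^sup>2"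
        by (simp add: power_mult_distrib)
    qed
    also have "\<dots> = (ennreal c)\<^sup>2 * (\<integral>\<^sup>+x. (P x)\<^sup>2 \<partial>\<mu>)" by (rule nn_integral_cmult) measurable
    also have "\<dots> < \<infinity>" using P_sq_fin by (simp add: ennreal_mult_less_top power_less_top_ennreal)
    finally show "(\<integral>\<^sup>+x. norm ((koopman R f x)\<^sup>2) \<partial>\<mu>) < \<infinity>" .
  qed
qed

lemma f_kint: assumes d: "dom f c" and y: "y \<in> X"
  shows "integrable \<mu> (\<lambda>x. f x * k x y)"
proof (rule Bochner_Integration.integrable_bound)
  show "integrable \<mu> (\<lambda>x. c * s y * k x x)" using kxx_int by simp
  show "(\<lambda>x. f x * k x y) \<in> borel_measurable \<mu>"
    using kcol_meas[OF y] d unfolding dom_def by (intro borel_measurable_times) auto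
  show "AE x in \<mu>. norm (f x * k x y) \<le> norm (c * s y * k x x)"
  proof (rule AE_I2)
    fix x assume "x \<in> space \<mu>"
    then have x: "x \<in> X" using space_mu by auto
    have "norm (f x * k x y) = \<bar>f x\<bar> * \<bar>k x y\<bar>" by (simp add: abs_mult)
    also have "\<dots> \<le> (c * s x) * (s x * s y)"
      using d x kxy_bound[OF x y] unfolding dom_def by (intro mult_mono) (auto simp: s_nonneg)
    also have "\<dots> = c * s y * (s x)\<^sup>2" by (simp add: power2_eq_square ac_simps)
    also have "\<dots> = norm (c * s y * k x x)"
      using s_sq[OF x] d s_nonneg kxx_nonneg[OF x] unfolding dom_def by (simp add: abs_mult)
    finally show "norm (f x * k x y) \<le> norm (c * s y * k x x)" .
  qed
qed

lemma f_sqint: assumes d: "dom f c" shows "square_integrable \<mu> f"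
  unfolding square_integrable_def
proof
  show m: "f \<in> borel_measurable \<mu>" using d unfolding dom_def by auto
  show "integrable \<mu> (\<lambda>x. (f x)\<^sup>2)"
  proof (rule Bochner_Integration.integrable_bound)
    show "integrable \<mu> (\<lambda>x. c\<^sup>2 * k x x)" using kxx_int by simp
    show "(\<lambda>x. (f x)\<^sup>2) \<in> borel_measurable \<mu>" using m by measurable
    show "AE x in \<mu>. norm ((f x)\<^sup>2) \<le> norm (c\<^sup>2 * k x x)"
    proof (rule AE_I2)
      fix x assume "x \<in> space \<mu>"
      then have x: "x \<in> X" using space_mu by auto
      have "norm ((f x)\<^sup>2) = \<bar>f x\<bar>\<^sup>2" by simp
      also have "\<dots> \<le> (c * s x)\<^sup>2" using d x unfolding dom_def by (intro power_mono) auto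
      also have "\<dots> = norm (c\<^sup>2 * k x x)"
        using s_sq[OF x] kxx_nonneg[OF x] by (simp add: power_mult_distrib abs_mult)
      finally show "norm ((f x)\<^sup>2) \<le> norm (c\<^sup>2 * k x x)" .
    qed
  qed
qed

lemma kme_abs: assumes d: "dom f c" and y: "y \<in> X"
  shows "\<bar>kme \<mu> k f y\<bar> \<le> c * s y * (\<integral>x. k x x \<partial>\<mu>)"
proof -
  have "\<bar>kme \<mu> k f y\<bar> \<le> (\<integral>x. c * s y * k x x \<partial>\<mu>)"
    unfolding kme_def
  proof (rule integral_abs_bound_integral)
    show "integrable \<mu> (\<lambda>x. f x * k x y)" by (rule f_kint[OF d y])
    show "integrable \<mu> (\<lambda>x. c * s y * k x x)" using kxx_int by simp
    fix x assume "x \<in> space \<mu>"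
    then have x: "x \<in> X" using space_mu by auto
    have "\<bar>f x * k x y\<bar> = \<bar>f x\<bar> * \<bar>k x y\<bar>" by (simp add: abs_mult)
    also have "\<dots> \<le> (c * s x) * (s x * s y)"
      using d x kxy_bound[OF x y] unfolding dom_def by (intro mult_mono) (auto simp: s_nonneg)
    also have "\<dots> = c * s y * (s x)\<^sup>2" by (simp add: power2_eq_square ac_simps)
    also have "\<dots> = c * s y * k x x" using s_sq[OF x] by simp
    finally show "\<bar>f x * k x y\<bar> \<le> c * s y * k x x" .
  qed
  then show ?thesis by simp
qed

definition CP where "CP = enn2real (\<integral>\<^sup>+x. P x * ennreal (s x) \<partial>\<mu>)"

lemma CP_eq: "ennreal CP = (\<integral>\<^sup>+x. P x * ennreal (s x) \<partial>\<mu>)"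
  unfolding CP_def using Ps_fin by simp

lemma kmeK_abs: assumes d: "dom f c" and y: "y \<in> X"
  shows "\<bar>kme \<mu> k (koopman R f) y\<bar> \<le> c * s y * CP"
proof -
  have "ennreal \<bar>kme \<mu> k (koopman R f) y\<bar> = ennreal (norm (\<integral>x. koopman R f x * k x y \<partial>\<mu>))"
    by (simp add: kme_def)
  also have "\<dots> \<le> (\<integral>\<^sup>+x. norm (koopman R f x * k x y) \<partial>\<mu>)"
    by (rule integral_norm_bound_ennreal[OF K_kint[OF d y]])
  also have "\<dots> \<le> ennreal c * ennreal (s y) * ennreal CP" unfolding CP_eq by (rule K_kint_nn[OF d y])
  also have "\<dots> = ennreal (c * s y * CP)"
    using d s_nonneg unfolding dom_def by (simp add: ennreal_mult CP_def)
  finally show ?thesis using d s_nonneg unfolding dom_def CP_def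
    by (subst (asm) ennreal_le_iff) (auto simp: enn2real_nonneg)
qed

lemma dom_diff: assumes "dom f c" "dom g d" shows "dom (\<lambda>x. f x - g x) (c + d)"
  using assms unfolding dom_def by (auto simp: distrib_right intro!: order_trans[OF abs_triangle_ineq4] add_mono)

lemma kme_diff: assumes d: "dom f c" "dom g d" and y: "y \<in> X"
  shows "kme \<mu> k f y - kme \<mu> k g y = kme \<mu> k (\<lambda>x. f x - g x) y"
  unfolding kme_def using f_kint[OF d(1) y] f_kint[OF d(2) y]
  by (simp add: left_diff_distrib)

lemma kmeK_diff: assumes d: "dom f c" "dom g d" and y: "y \<in> X"
  shows "kme \<mu> k (koopman R f) y - kme \<mu> k (koopman R g) y = kme \<mu> k (koopman R (\<lambda>z. f z - g z)) y"
proof -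
  have "kme \<mu> k (koopman R f) y - kme \<mu> k (koopman R g) y = (\<integral>x. koopman R f x * k x y - koopman R g x * k x y \<partial>\<mu>)"
    unfolding kme_def using K_kint[OF d(1) y] K_kint[OF d(2) y] by simp
  also have "\<dots> = (\<integral>x. koopman R (\<lambda>z. f z - g z) x * k x y \<partial>\<mu>)"
  proof (rule integral_cong_AE)
    show "(\<lambda>x. koopman R f x * k x y - koopman R g x * k x y) \<in> borel_measurable \<mu>"
      using K_meas kcol_meas[OF y] d unfolding dom_def by (intro borel_measurable_times borel_measurable_diff) auto
    show "(\<lambda>x. koopman R (\<lambda>z. f z - g z) x * k x y) \<in> borel_measurable \<mu>"
      using K_meas kcol_meas[OF y] d unfolding dom_def by (intro borel_measurable_times borel_measurable_diff) auto
    show "AE x in \<mu>. koopman R f x * k x y - koopman R g x * k x y = koopman R (\<lambda>z. f z - g z) x * k x y"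
      using K_int_AE[OF d(1)] K_int_AE[OF d(2)]
      by eventually_elim (simp add: koopman_def left_diff_distrib)
  qed
  finally show ?thesis unfolding kme_def .
qed

end

locale kp2 = kp X k \<mu> R for X :: "'a::euclidean_space set" and k \<mu> R +
  assumes A2: "\<And>\<psi>. square_integrable \<mu> \<psi> \<Longrightarrow>
               (\<integral>x. (\<integral>y. k x y * \<psi> x * \<psi> y \<partial>\<mu>) \<partial>\<mu>) = 0 \<Longrightarrow> (AE x in \<mu>. \<psi> x = 0)"
    and A3: "\<And>\<psi>. \<psi> \<in> rkhs X k \<Longrightarrow> (AE x in \<mu>. \<psi> x = 0) \<Longrightarrow> (\<forall>x\<in>X. \<psi> x = 0)"
begin

lemma INJ: assumes g: "square_integrable \<mu> g" and z: "\<And>x. x \<in> X \<Longrightarrow> kme \<mu> k g x = 0"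
  shows "AE x in \<mu>. g x = 0"
proof (rule A2[OF g])
  have "(\<integral>x. (\<integral>y. k x y * g x * g y \<partial>\<mu>) \<partial>\<mu>) = (\<integral>x. 0 \<partial>\<mu>)"
  proof (rule Bochner_Integration.integral_cong[OF refl])
    fix x assume "x \<in> space \<mu>"
    then have x: "x \<in> X" using space_mu by auto
    have "(\<integral>y. k x y * g x * g y \<partial>\<mu>) = (\<integral>y. g x * (g y * k y x) \<partial>\<mu>)"
      using x space_mu by (intro Bochner_Integration.integral_cong[OF refl]) (auto simp: sym[of x])
    also have "\<dots> = g x * kme \<mu> k g x" by (simp add: kme_def)
    finally show "(\<integral>y. k x y * g x * g y \<partial>\<mu>) = 0" using z[OF x] by simp
  qed
  then show "(\<integral>x. (\<integral>y. k x y * g x * g y \<partial>\<mu>) \<partial>\<mu>) = 0" by simp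
qed

lemma sq_diff_bound: "norm ((a - b)\<^sup>2) \<le> norm (2 * a\<^sup>2 + 2 * b\<^sup>2)" for a b :: real
proof -
  have "0 \<le> (a + b)\<^sup>2" by simp
  moreover have "(a - b)\<^sup>2 = 2 * a\<^sup>2 + 2 * b\<^sup>2 - (a + b)\<^sup>2" by (simp add: power2_eq_square algebra_simps)
  moreover have "0 \<le> a\<^sup>2" "0 \<le> b\<^sup>2" "0 \<le> (a - b)\<^sup>2" by simp_all
  moreover have "norm ((a - b)\<^sup>2) = (a - b)\<^sup>2" by simp
  moreover have "norm (2 * a\<^sup>2 + 2 * b\<^sup>2) = 2 * a\<^sup>2 + 2 * b\<^sup>2"
  proof -
    have h: "0 \<le> 2 * a\<^sup>2 + 2 * b\<^sup>2" by simp
    then show ?thesis by (simp only: real_norm_def abs_of_nonneg)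
  qed
  ultimately show ?thesis by linarith
qed

lemma part1: "fst ` koopH_graph \<mu> X k R = {\<psi> \<in> rkhs X k. \<exists>h \<in> rkhs X k. AE x in \<mu>. koopman R \<psi> x = h x}"
proof (intro equalityI subsetI)
  fix \<psi> assume "\<psi> \<in> fst ` koopH_graph \<mu> X k R"
  then obtain \<phi> where G: "\<psi> \<in> rkhs X k" "\<phi> \<in> rkhs X k" "\<forall>y\<in>X. kme \<mu> k \<phi> y = kme \<mu> k (koopman R \<psi>) y"
    unfolding koopH_graph_def by auto
  note d\<psi> = rkhs_dom[OF G(1)] and d\<phi> = rkhs_dom[OF G(2)]
  define g where "g x = \<phi> x - koopman R \<psi> x" for x
  have sq1: "square_integrable \<mu> \<phi>" by (rule f_sqint[OF d\<phi>])
  have sq2: "square_integrable \<mu> (koopman R \<psi>)" by (rule K_sqint[OF d\<psi>])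
  have gsq: "square_integrable \<mu> g"
    unfolding square_integrable_def
  proof
    show gm: "g \<in> borel_measurable \<mu>" using sq1 sq2 unfolding g_def square_integrable_def by auto
    show "integrable \<mu> (\<lambda>x. (g x)\<^sup>2)"
    proof (rule Bochner_Integration.integrable_bound)
      show "integrable \<mu> (\<lambda>x. 2 * (\<phi> x)\<^sup>2 + 2 * (koopman R \<psi> x)\<^sup>2)"
        using sq1 sq2 unfolding square_integrable_def by auto
      show "(\<lambda>x. (g x)\<^sup>2) \<in> borel_measurable \<mu>" using gm by measurable
      show "AE x in \<mu>. norm ((g x)\<^sup>2) \<le> norm (2 * (\<phi> x)\<^sup>2 + 2 * (koopman R \<psi> x)\<^sup>2)"
        unfolding g_def by (intro AE_I2 sq_diff_bound)
    qed
  qed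
  have "kme \<mu> k g y = 0" if y: "y \<in> X" for y
  proof -
    have "kme \<mu> k g y = kme \<mu> k \<phi> y - kme \<mu> k (koopman R \<psi>) y"
      unfolding kme_def g_def using f_kint[OF d\<phi> y] K_kint[OF d\<psi> y] by (simp add: left_diff_distrib)
    then show ?thesis using G(3) y by simp
  qed
  then have "AE x in \<mu>. g x = 0" by (intro INJ[OF gsq])
  then have "AE x in \<mu>. koopman R \<psi> x = \<phi> x" unfolding g_def by auto
  then show "\<psi> \<in> {\<psi> \<in> rkhs X k. \<exists>h \<in> rkhs X k. AE x in \<mu>. koopman R \<psi> x = h x}" using G by auto
next
  fix \<psi> assume "\<psi> \<in> {\<psi> \<in> rkhs X k. \<exists>h \<in> rkhs X k. AE x in \<mu>. koopman R \<psi> x = h x}"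
  then obtain h where H: "\<psi> \<in> rkhs X k" "h \<in> rkhs X k" "AE x in \<mu>. koopman R \<psi> x = h x" by auto
  have "kme \<mu> k h y = kme \<mu> k (koopman R \<psi>) y" if y: "y \<in> X" for y
    unfolding kme_def
  proof (rule integral_cong_AE)
    show "(\<lambda>x. h x * k x y) \<in> borel_measurable \<mu>"
      using rkhs_meas[OF H(2)] kcol_meas[OF y] by (intro borel_measurable_times)
    show "(\<lambda>x. koopman R \<psi> x * k x y) \<in> borel_measurable \<mu>"
      using K_meas[OF rkhs_meas[OF H(1)]] kcol_meas[OF y] by (intro borel_measurable_times)
    show "AE x in \<mu>. h x * k x y = koopman R \<psi> x * k x y" using H(3) by auto
  qed
  then have "(\<psi>, h) \<in> koopH_graph \<mu> X k R" unfolding koopH_graph_def using H by auto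
  then show "\<psi> \<in> fst ` koopH_graph \<mu> X k R" by (metis fst_conv image_eqI)
qed

lemma part2: "rkhs_closed_operator X k (koopH_graph \<mu> X k R)"
  unfolding rkhs_closed_operator_def
proof (intro conjI allI impI)
  show "koopH_graph \<mu> X k R \<subseteq> rkhs X k \<times> rkhs X k" unfolding koopH_graph_def by auto
next
  fix \<psi> \<phi>1 \<phi>2 assume 1: "(\<psi>, \<phi>1) \<in> koopH_graph \<mu> X k R" and 2: "(\<psi>, \<phi>2) \<in> koopH_graph \<mu> X k R"
  then have H: "\<phi>1 \<in> rkhs X k" "\<phi>2 \<in> rkhs X k" and E: "\<And>y. y \<in> X \<Longrightarrow> kme \<mu> k \<phi>1 y = kme \<mu> k \<phi>2 y"
    unfolding koopH_graph_def by auto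
  define g where "g x = \<phi>1 x - \<phi>2 x" for x
  have gH: "g \<in> rkhs X k" unfolding g_def using rkhs_diff[OF H] .
  have "kme \<mu> k g y = 0" if y: "y \<in> X" for y
    using kme_diff[OF rkhs_dom[OF H(1)] rkhs_dom[OF H(2)] y] E[OF y] unfolding g_def by simp
  then have "AE x in \<mu>. g x = 0" by (intro INJ[OF f_sqint[OF rkhs_dom[OF gH]]])
  then have "\<forall>x\<in>X. g x = 0" by (rule A3[OF gH])
  then show "\<forall>x\<in>X. \<phi>1 x = \<phi>2 x" unfolding g_def by auto
next
  fix \<psi>s \<phi>s \<psi> \<phi>
  assume G: "\<forall>n. (\<psi>s n, \<phi>s n) \<in> koopH_graph \<mu> X k R" and H: "\<psi> \<in> rkhs X k" "\<phi> \<in> rkhs X k"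
    and L1: "(\<lambda>n. rkhs_norm X k (\<lambda>x. \<psi>s n x - \<psi> x)) \<longlonglongrightarrow> 0"
    and L2: "(\<lambda>n. rkhs_norm X k (\<lambda>x. \<phi>s n x - \<phi> x)) \<longlonglongrightarrow> 0"
  have Hs: "\<psi>s n \<in> rkhs X k" "\<phi>s n \<in> rkhs X k" for n using G unfolding koopH_graph_def by auto
  have Es: "kme \<mu> k (\<phi>s n) y = kme \<mu> k (koopman R (\<psi>s n)) y" if "y \<in> X" for n y
    using G that unfolding koopH_graph_def by auto
  have "kme \<mu> k \<phi> y = kme \<mu> k (koopman R \<psi>) y" if y: "y \<in> X" for y
  proof -
    have a: "(\<lambda>n. kme \<mu> k (\<phi>s n) y - kme \<mu> k \<phi> y) \<longlonglongrightarrow> 0"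
    proof (rule Lim_null_comparison)
      have "(\<lambda>n. rkhs_norm X k (\<lambda>x. \<phi>s n x - \<phi> x) * (s y * (\<integral>x. k x x \<partial>\<mu>))) \<longlonglongrightarrow> 0 * (s y * (\<integral>x. k x x \<partial>\<mu>))"
        using L2 by (rule tendsto_mult_right)
      then show "(\<lambda>n. rkhs_norm X k (\<lambda>x. \<phi>s n x - \<phi> x) * (s y * (\<integral>x. k x x \<partial>\<mu>))) \<longlonglongrightarrow> 0" by simp
      show "\<forall>\<^sub>F n in sequentially. norm (kme \<mu> k (\<phi>s n) y - kme \<mu> k \<phi> y) \<le> rkhs_norm X k (\<lambda>x. \<phi>s n x - \<phi> x) * (s y * (\<integral>x. k x x \<partial>\<mu>))"
      proof (rule always_eventually, rule allI)
        fix n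
        have dH: "(\<lambda>x. \<phi>s n x - \<phi> x) \<in> rkhs X k" by (rule rkhs_diff[OF Hs(2) H(2)])
        have "kme \<mu> k (\<phi>s n) y - kme \<mu> k \<phi> y = kme \<mu> k (\<lambda>x. \<phi>s n x - \<phi> x) y"
          by (rule kme_diff[OF rkhs_dom[OF Hs(2)] rkhs_dom[OF H(2)] y])
        then show "norm (kme \<mu> k (\<phi>s n) y - kme \<mu> k \<phi> y) \<le> rkhs_norm X k (\<lambda>x. \<phi>s n x - \<phi> x) * (s y * (\<integral>x. k x x \<partial>\<mu>))"
          using kme_abs[OF rkhs_dom[OF dH] y] by (simp add: ac_simps)
      qed
    qed
    have b: "(\<lambda>n. kme \<mu> k (koopman R (\<psi>s n)) y - kme \<mu> k (koopman R \<psi>) y) \<longlonglongrightarrow> 0"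
    proof (rule Lim_null_comparison)
      have "(\<lambda>n. rkhs_norm X k (\<lambda>x. \<psi>s n x - \<psi> x) * (s y * CP)) \<longlonglongrightarrow> 0 * (s y * CP)"
        using L1 by (rule tendsto_mult_right)
      then show "(\<lambda>n. rkhs_norm X k (\<lambda>x. \<psi>s n x - \<psi> x) * (s y * CP)) \<longlonglongrightarrow> 0" by simp
      show "\<forall>\<^sub>F n in sequentially. norm (kme \<mu> k (koopman R (\<psi>s n)) y - kme \<mu> k (koopman R \<psi>) y) \<le> rkhs_norm X k (\<lambda>x. \<psi>s n x - \<psi> x) * (s y * CP)"
      proof (rule always_eventually, rule allI)
        fix n
        have dH: "(\<lambda>x. \<psi>s n x - \<psi> x) \<in> rkhs X k" by (rule rkhs_diff[OF Hs(1) H(1)])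
        have "kme \<mu> k (koopman R (\<psi>s n)) y - kme \<mu> k (koopman R \<psi>) y = kme \<mu> k (koopman R (\<lambda>x. \<psi>s n x - \<psi> x)) y"
          by (rule kmeK_diff[OF rkhs_dom[OF Hs(1)] rkhs_dom[OF H(1)] y])
        then show "norm (kme \<mu> k (koopman R (\<psi>s n)) y - kme \<mu> k (koopman R \<psi>) y) \<le> rkhs_norm X k (\<lambda>x. \<psi>s n x - \<psi> x) * (s y * CP)"
          using kmeK_abs[OF rkhs_dom[OF dH] y] by (simp add: ac_simps)
      qed
    qed
    have "(\<lambda>n. (kme \<mu> k (koopman R (\<psi>s n)) y - kme \<mu> k (koopman R \<psi>) y) - (kme \<mu> k (\<phi>s n) y - kme \<mu> k \<phi> y)) \<longlonglongrightarrow> 0 - 0"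
      using b a by (rule tendsto_diff)
    moreover have "(\<lambda>n. (kme \<mu> k (koopman R (\<psi>s n)) y - kme \<mu> k (koopman R \<psi>) y) - (kme \<mu> k (\<phi>s n) y - kme \<mu> k \<phi> y))
        = (\<lambda>n. kme \<mu> k \<phi> y - kme \<mu> k (koopman R \<psi>) y)"
      using Es[OF y] by simp
    ultimately have "(\<lambda>n. kme \<mu> k \<phi> y - kme \<mu> k (koopman R \<psi>) y) \<longlonglongrightarrow> 0" by simp
    then have "kme \<mu> k \<phi> y - kme \<mu> k (koopman R \<psi>) y = 0" by (simp add: LIMSEQ_const_iff)
    then show ?thesis by simp
  qed
  then show "(\<psi>, \<phi>) \<in> koopH_graph \<mu> X k R" unfolding koopH_graph_def using H by auto
qed

end

theorem lemma4p3:
  fixes X :: "'a::euclidean_space set"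
    and \<mu> :: "'a measure"
    and \<rho> :: "real \<Rightarrow> 'a \<Rightarrow> 'a measure"
    and k :: "'a \<Rightarrow> 'a \<Rightarrow> real"
    and t :: real
  assumes mu_prob: "prob_space \<mu>"
    and mu_sets: "sets \<mu> = sets (restrict_space borel X)"
    and rho_kernel: "\<And>s. s \<ge> 0 \<Longrightarrow> \<rho> s \<in> \<mu> \<rightarrow>\<^sub>M prob_algebra \<mu>"
    and mu_invariant: "\<And>s A. s \<ge> 0 \<Longrightarrow> A \<in> sets \<mu> \<Longrightarrow>
                          (\<integral>\<^sup>+ x. emeasure (\<rho> s x) A \<partial>\<mu>) = emeasure \<mu> A"
    and k_pd: "pd_kernel X k"
    and A1: "square_integrable \<mu> (\<lambda>x. k x x)"
    and A2: "\<And>\<psi>. square_integrable \<mu> \<psi> \<Longrightarrow>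
               (\<integral>x. (\<integral>y. k x y * \<psi> x * \<psi> y \<partial>\<mu>) \<partial>\<mu>) = 0 \<Longrightarrow> (AE x in \<mu>. \<psi> x = 0)"
    and A3: "\<And>\<psi>. \<psi> \<in> rkhs X k \<Longrightarrow> (AE x in \<mu>. \<psi> x = 0) \<Longrightarrow> (\<forall>x\<in>X. \<psi> x = 0)"
    and t_nonneg: "t \<ge> 0"
  shows "fst ` koopH_graph \<mu> X k (\<rho> t) =
           {\<psi> \<in> rkhs X k. \<exists>h \<in> rkhs X k. AE x in \<mu>. koopman (\<rho> t) \<psi> x = h x}
         \<and> rkhs_closed_operator X k (koopH_graph \<mu> X k (\<rho> t))"
proof -
  have "kp2 X k \<mu> (\<rho> t)"
    unfolding kp2_def kp_def kp_axioms_def kp2_axioms_def rk_def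
    using k_pd mu_prob mu_sets rho_kernel[OF t_nonneg] mu_invariant[OF t_nonneg] A1 A2 A3 by blast
  then interpret kp2 X k \<mu> "\<rho> t" .
  show ?thesis using part1 part2 by auto
qed

end
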